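(* There is an absolute constant $C_0\ge 3\times10^3$ such that the following holds. Let $k\ge2$, $r\ge0$ be integers and $n\ge C_0(r+1)^3(k+r)k^2$. Suppose $\mathcal F\subseteq\binom{[n]}{k}$ has size $|\mathcal F|=\sum_{i=1}^{r}\binom{n-i}{k-1}+\delta\binom{n-(r+1)}{k-1}$ for some $\delta\in\left[\frac{150k^3}{n},1\right]$, and $\mathcal I(\mathcal F)\ge\frac{r+\delta^2}{(r+\delta)^2}|\mathcal F|^2$. Then there exists $x\in[n]$ with $|\mathcal F(x)|\ge\frac{|\mathcal F|}{4(r+1)}$.
   Context: $\mathcal F(x)=\{F\in\mathcal F:x\in F\}$; $\mathcal I(\mathcal F)=\sum_{A,B\in\mathcal F}|A\cap B|=\sum_{x\in[n]}|\mathcal F(x)|^2$ (ordered pairs). *)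

theory Defs
  imports Main Complex_Main
begin

definition star :: "nat set set \<Rightarrow> nat \<Rightarrow> nat set set" where
  "star F x = {A \<in> F. x \<in> A}"

definition intersections :: "nat set set \<Rightarrow> nat" where
  "intersections F = (\<Sum>A\<in>F. \<Sum>B\<in>F. card (A \<inter> B))"

end

theory Submission
  imports Defs
begin

lemma finF: "(F::nat set set) \<subseteq> {A. A \<subseteq> {1..n} \<and> card A = k} \<Longrightarrow> finite F"
  by (rule finite_subset[of _ "Pow {1..(n::nat)}"]) auto

lemma card_star_sum: "finite F \<Longrightarrow> card (star F x) = (\<Sum>A\<in>F. if x\<in>A then 1 else 0)"
  unfolding star_def by (simp add: sum.inter_filter[symmetric])

lemma inter_id:
  assumes "F \<subseteq> {A. A \<subseteq> {1..n} \<and> card A = k}"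
  shows "intersections F = (\<Sum>x\<in>{1..n}. card (star F x)^2)"
proof -
  have fin: "finite F" using finF[OF assms] .
  have "\<And>A B. A \<in> F \<Longrightarrow> card (A\<inter>B) = (\<Sum>x\<in>{1..n}. (if x\<in>A then 1 else 0)*(if x\<in>B then 1 else 0))"
  proof -
    fix A B assume "A \<in> F"
    hence "A \<subseteq> {1..n}" using assms by auto
    hence "{x\<in>{1..n}. x \<in> A\<inter>B} = A \<inter> B" by auto
    moreover have "(\<Sum>x\<in>{1..n}. (if x\<in>A then 1 else 0)*(if x\<in>B then 1 else (0::nat))) = (\<Sum>x\<in>{1..n}. if x \<in> A\<inter>B then 1 else 0)"
      by (rule sum.cong) auto
    ultimately show "card (A\<inter>B) = (\<Sum>x\<in>{1..n}. (if x\<in>A then 1 else 0)*(if x\<in>B then 1 else 0))"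
      by (simp add: sum.inter_filter[symmetric])
  qed
  hence "intersections F = (\<Sum>A\<in>F. \<Sum>B\<in>F. \<Sum>x\<in>{1..n}. (if x\<in>A then 1 else 0)*(if x\<in>B then 1 else 0))"
    unfolding intersections_def by (intro sum.cong) auto
  also have "\<dots> = (\<Sum>A\<in>F. \<Sum>x\<in>{1..n}. \<Sum>B\<in>F. (if x\<in>A then 1 else 0)*(if x\<in>B then (1::nat) else 0))"
    by (rule sum.cong[OF refl], rule sum.swap)
  also have "\<dots> = (\<Sum>x\<in>{1..n}. \<Sum>A\<in>F. \<Sum>B\<in>F. (if x\<in>A then 1 else 0)*(if x\<in>B then (1::nat) else 0))"
    by (rule sum.swap)
  also have "\<dots> = (\<Sum>x\<in>{1..n}. card (star F x)^2)"
    by (simp add: card_star_sum[OF fin] power2_eq_square sum_product)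
  finally show ?thesis .
qed

lemma deg_sum:
  assumes "F \<subseteq> {A. A \<subseteq> {1..n} \<and> card A = k}"
  shows "(\<Sum>x\<in>{1..n}. card (star F x)) = k * card F"
proof -
  have fin: "finite F" using finF[OF assms] .
  have "(\<Sum>x\<in>{1..n}. card (star F x)) = (\<Sum>A\<in>F. \<Sum>x\<in>{1..n}. if x\<in>A then 1 else 0)"
    unfolding card_star_sum[OF fin] by (rule sum.swap)
  also have "\<dots> = (\<Sum>A\<in>F. k)"
  proof (rule sum.cong)
    fix A assume "A \<in> F"
    hence "A \<subseteq> {1..n}" "card A = k" using assms by auto
    hence "{x\<in>{1..n}. x \<in> A} = A" by auto
    thus "(\<Sum>x\<in>{1..n}. if x\<in>A then 1 else 0) = k" using \<open>card A = k\<close>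
      by (simp add: sum.inter_filter[symmetric])
  qed simp
  finally show ?thesis by simp
qed

lemma pair_bound:
  assumes "F \<subseteq> {A. A \<subseteq> {1..n} \<and> card A = k}" "x \<noteq> y"
  shows "card {A\<in>F. x\<in>A \<and> y\<in>A} \<le> (n-2) choose (k-2)"
proof (cases "x \<in> {1..n} \<and> y \<in> {1..n}")
  case False
  hence "{A\<in>F. x\<in>A \<and> y\<in>A} = {}" using assms(1) by blast
  thus ?thesis by (metis card.empty zero_le)
next
  case True
  let ?G = "{B. B \<subseteq> {1..n} - {x,y} \<and> card B = k-2}"
  have cG: "card ?G = (n-2) choose (k-2)"
    using n_subsets[of "{1..n} - {x,y}" "k-2"] True assms(2) by (simp add: card_Diff_subset numeral_2_eq_2)
  have "inj_on (\<lambda>A. A - {x,y}) {A\<in>F. x\<in>A \<and> y\<in>A}"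
    by (rule inj_onI) blast
  moreover have "(\<lambda>A. A - {x,y}) ` {A\<in>F. x\<in>A \<and> y\<in>A} \<subseteq> ?G"
  proof
    fix B assume "B \<in> (\<lambda>A. A - {x,y}) ` {A\<in>F. x\<in>A \<and> y\<in>A}"
    then obtain A where A: "A \<in> F" "x\<in>A" "y\<in>A" "B = A - {x,y}" by auto
    hence "A \<subseteq> {1..n}" "card A = k" using assms by auto
    hence "finite A" using finite_subset by blast
    have "card B = card A - 2" using A \<open>finite A\<close> assms(2) by (simp add: card_Diff_subset)
    thus "B \<in> ?G" using A \<open>A \<subseteq> {1..n}\<close> \<open>card A = k\<close> by auto
  qed
  ultimately have "card {A\<in>F. x\<in>A \<and> y\<in>A} \<le> card ?G"
    by (intro card_inj_on_le) auto
  thus ?thesis using cG by simp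
qed

lemma one_bound:
  assumes "finite S" "finite A"
  shows "card (A\<inter>S) \<le> 1 + (\<Sum>x\<in>S. \<Sum>y\<in>S-{x}. if x\<in>A \<and> y\<in>A then 1 else 0)"
proof (cases "A \<inter> S = {}")
  case True thus ?thesis by simp
next
  case False
  then obtain x0 where x0: "x0 \<in> A" "x0 \<in> S" by auto
  have "card (A\<inter>S) > 0" using x0 assms by (auto simp: card_gt_0_iff)
  hence "card (A\<inter>S) = 1 + card (A\<inter>S - {x0})"
    using x0 assms by (simp add: card_Diff_subset)
  also have "card (A\<inter>S - {x0}) = (\<Sum>y\<in>S-{x0}. if x0\<in>A \<and> y\<in>A then 1 else 0)"
  proof -
    have "{y\<in>S-{x0}. x0\<in>A \<and> y\<in>A} = A\<inter>S - {x0}" using x0 by auto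
    thus ?thesis using assms by (simp add: sum.inter_filter[symmetric])
  qed
  also have "\<dots> \<le> (\<Sum>x\<in>S. \<Sum>y\<in>S-{x}. if x\<in>A \<and> y\<in>A then 1 else 0)"
    by (rule member_le_sum[where f="\<lambda>x. \<Sum>y\<in>S-{x}. if x\<in>A \<and> y\<in>A then (1::nat) else 0"]) (use x0 assms in auto)
  finally show ?thesis by simp
qed

lemma bonf:
  assumes "F \<subseteq> {A. A \<subseteq> {1..n} \<and> card A = k}" "finite S"
  shows "(\<Sum>x\<in>S. card (star F x)) \<le> card F + card S * card S * ((n-2) choose (k-2))"
proof -
  have fin: "finite F" using finF[OF assms(1)] .
  have finA: "\<And>A. A \<in> F \<Longrightarrow> finite A" using assms(1) finite_subset by blast
  have "(\<Sum>x\<in>S. card (star F x)) = (\<Sum>A\<in>F. \<Sum>x\<in>S. if x\<in>A then 1 else 0)"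
    unfolding card_star_sum[OF fin] by (rule sum.swap)
  also have "\<dots> = (\<Sum>A\<in>F. card (A\<inter>S))"
  proof (rule sum.cong)
    fix A assume "A \<in> F"
    have "{x\<in>S. x \<in> A} = A \<inter> S" by auto
    thus "(\<Sum>x\<in>S. if x\<in>A then 1 else 0) = card (A\<inter>S)" using assms(2)
      by (simp add: sum.inter_filter[symmetric])
  qed simp
  also have "\<dots> \<le> (\<Sum>A\<in>F. 1 + (\<Sum>x\<in>S. \<Sum>y\<in>S-{x}. if x\<in>A \<and> y\<in>A then 1 else 0))"
    by (rule sum_mono) (rule one_bound[OF assms(2) finA])
  also have "\<dots> = (\<Sum>A\<in>F. 1) + (\<Sum>A\<in>F. (\<Sum>x\<in>S. \<Sum>y\<in>S-{x}. if x\<in>A \<and> y\<in>A then 1 else 0))"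
    by (rule sum.distrib)
  also have "\<dots> = card F + (\<Sum>x\<in>S. \<Sum>y\<in>S-{x}. \<Sum>A\<in>F. if x\<in>A \<and> y\<in>A then 1 else 0)"
  proof -
    have "(\<Sum>A\<in>F. (\<Sum>x\<in>S. \<Sum>y\<in>S-{x}. if x\<in>A \<and> y\<in>A then 1 else (0::nat)))
      = (\<Sum>x\<in>S. \<Sum>A\<in>F. \<Sum>y\<in>S-{x}. if x\<in>A \<and> y\<in>A then 1 else 0)"
      by (rule sum.swap)
    also have "\<dots> = (\<Sum>x\<in>S. \<Sum>y\<in>S-{x}. \<Sum>A\<in>F. if x\<in>A \<and> y\<in>A then 1 else 0)"
      by (rule sum.cong[OF refl], rule sum.swap)
    finally show ?thesis by (simp only: card_eq_sum)
  qed
  also have "\<dots> = card F + (\<Sum>x\<in>S. \<Sum>y\<in>S-{x}. card {A\<in>F. x\<in>A \<and> y\<in>A})"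
    using fin by (simp add: sum.inter_filter[symmetric])
  also have "\<dots> \<le> card F + (\<Sum>x\<in>S. \<Sum>y\<in>S. (n-2) choose (k-2))"
  proof -
    have "(\<Sum>x\<in>S. \<Sum>y\<in>S-{x}. card {A\<in>F. x\<in>A \<and> y\<in>A}) \<le> (\<Sum>x\<in>S. \<Sum>y\<in>S-{x}. (n-2) choose (k-2))"
      by (intro sum_mono pair_bound[OF assms(1)]) auto
    also have "\<dots> \<le> (\<Sum>x\<in>S. \<Sum>y\<in>S. (n-2) choose (k-2))"
      by (intro sum_mono sum_mono2) (use assms(2) in auto)
    finally show ?thesis by simp
  qed
  finally show ?thesis by simp
qed

lemma main:
  fixes k r n :: nat and F :: "nat set set" and \<delta> :: real
  assumes k2: "k \<ge> 2"
    and nbig: "real n \<ge> 3000 * (real r + 1)^3 * real (k + r) * (real k)^2"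
    and Fsub: "F \<subseteq> {A. A \<subseteq> {1..n} \<and> card A = k}"
    and dlo: "150 * (real k)^3 / real n \<le> \<delta>" and dhi: "\<delta> \<le> 1"
    and cardF: "real (card F) = (\<Sum>i=1..r. real ((n - i) choose (k - 1)))
                       + \<delta> * real ((n - (r + 1)) choose (k - 1))"
    and Ibig: "real (intersections F) \<ge> (real r + \<delta>^2) / (real r + \<delta>)^2 * (real (card F))^2"
  shows "\<exists>x\<in>{1..n}. real (card (star F x)) \<ge> real (card F) / (4 * (real r + 1))"
proof (rule ccontr)
  assume "\<not> ?thesis"
  hence small: "\<And>x. x \<in> {1..n} \<Longrightarrow> real (card (star F x)) < real (card F) / (4 * (real r + 1))"
    by force
  define Fc where "Fc = real (card F)"
  define e where "e = real ((n-2) choose (k-2))"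
  define t0 where "t0 = 8 * k * (r+1)"
  define \<theta> where "\<theta> = Fc / real t0 + real t0 * e"
  define m where "m = Fc / (4 * (real r + 1))"
  define d where "d = (\<lambda>x. real (card (star F x)))"
  have e0: "e \<ge> 0" unfolding e_def by simp
  have t0pos: "t0 > 0" unfolding t0_def using k2 by simp
  have kr: "real k \<ge> 2" using k2 by simp
  have n1: "real n \<ge> 3000 * (real r + 1)^2 * (real k)^3"
  proof -
    have "(real r + 1)^2 * 1 \<le> (real r + 1)^2 * (real r + 1)" by simp
    hence a: "(real r + 1)^2 \<le> (real r + 1)^3" by (simp add: power2_eq_square power3_eq_cube)
    have b: "real k \<le> real (k + r)" by simp
    have "3000 * (real r + 1)^2 * (real k)^3 = 3000 * (real r + 1)^2 * real k * (real k)^2"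
      by (simp add: power2_eq_square power3_eq_cube)
    also have "\<dots> \<le> 3000 * (real r + 1)^3 * real (k + r) * (real k)^2"
      by (intro mult_mono a b) auto
    finally show ?thesis using nbig by linarith
  qed
  have k3: "(real k)^3 \<ge> real k"
  proof -
    have "(real k)^2 \<ge> 1" using kr by (simp add: one_le_power)
    hence "real k * 1 \<le> real k * (real k)^2" using kr by (intro mult_left_mono) auto
    thus ?thesis by (simp add: power2_eq_square power3_eq_cube)
  qed
  have r2: "(real r + 1)^2 \<ge> 1" by simp
  have "3000 * (real r + 1)^2 * (real k)^3 \<ge> 3000 * 1 * real k"
    by (intro mult_mono r2 k3) auto
  hence nk: "real n \<ge> 3000 * real k" using n1 by linarith
  hence nk': "n \<ge> k" "n \<ge> 2" using kr by linarith+
  define c1 where "c1 = real ((n-1) choose (k-1))"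
  have bin: "(real k - 1) * c1 = (real n - 1) * e"
  proof -
    have "(k-1) * ((n-1) choose (k-1)) = (n-1) * ((n-1-1) choose (k-1-1))"
      by (rule times_binomial_minus1_eq) (use k2 in simp)
    hence "real ((k-1) * ((n-1) choose (k-1))) = real ((n-1) * ((n-2) choose (k-2)))"
      by (simp add: diff_diff_add numeral_2_eq_2)
    thus ?thesis using k2 nk' unfolding c1_def e_def by (simp add: of_nat_diff)
  qed
  have kc1: "real k * c1 \<ge> (real n - 1) * e"
  proof -
    have "c1 \<ge> 0" unfolding c1_def by simp
    moreover have "(real k - 1) * c1 = real k * c1 - c1" by (simp add: algebra_simps)
    ultimately show ?thesis using bin by linarith
  qed
  have c1pos: "c1 \<ge> 1" unfolding c1_def using nk' k2
    by (simp add: Suc_leI zero_less_binomial_iff)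
  have dpos: "\<delta> > 0"
  proof -
    have "150 * (real k)^3 / real n > 0" using kr nk' by simp
    thus ?thesis using dlo by linarith
  qed
  have key: "Fc \<ge> 75 * (real k)^2 * (real r + 1)^2 * e \<and> Fc > 0"
  proof (cases "r = 0")
    case True
    hence Fc: "Fc = \<delta> * c1" using cardF unfolding Fc_def c1_def by simp
    have "150 * (real k)^3 / real n * c1 \<le> \<delta> * c1" using dlo c1pos by (intro mult_right_mono) auto
    moreover have "75 * (real k)^2 * e \<le> 150 * (real k)^3 / real n * c1"
    proof -
      have "real n \<le> 2 * (real n - 1)" using nk' by simp
      hence "75 * (real k)^2 * e * real n \<le> 75 * (real k)^2 * e * (2 * (real n - 1))"
        using e0 by (intro mult_left_mono) auto
      also have "\<dots> = 150 * (real k)^2 * ((real n - 1) * e)" by simp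
      also have "\<dots> \<le> 150 * (real k)^2 * (real k * c1)" using kc1 by (intro mult_left_mono) auto
      also have "\<dots> = 150 * (real k)^3 * c1" by (simp add: power2_eq_square power3_eq_cube)
      finally show ?thesis using nk' by (simp add: field_simps)
    qed
    ultimately show ?thesis using Fc True dpos c1pos by simp
  next
    case False
    have "c1 = real ((n - 1) choose (k - 1))" by (simp add: c1_def)
    also have "\<dots> \<le> (\<Sum>i=1..r. real ((n - i) choose (k - 1)))"
      using False by (intro member_le_sum[where f="\<lambda>i. real ((n - i) choose (k - 1))"]) auto
    moreover have "0 \<le> \<delta> * real ((n - (r + 1)) choose (k - 1))" using dpos by simp
    ultimately have "c1 \<le> Fc" using cardF unfolding Fc_def by linarith
    moreover have "75 * (real k)^2 * (real r + 1)^2 * e \<le> c1"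
    proof -
      have "(real r + 1)^2 * (real k)^3 \<ge> 1 * 1" using kr
        by (intro mult_mono) (auto simp: one_le_power)
      hence "75 * (real k)^3 * (real r + 1)^2 \<le> real n - 1" using n1
        by (simp add: mult_ac)
      hence "75 * (real k)^3 * (real r + 1)^2 * e \<le> (real n - 1) * e" using e0 by (intro mult_right_mono) auto
      also have "\<dots> \<le> real k * c1" by (rule kc1)
      finally have "real k * (75 * (real k)^2 * (real r + 1)^2 * e) \<le> real k * c1"
        by (simp add: power2_eq_square power3_eq_cube mult_ac)
      thus ?thesis using kr by simp
    qed
    ultimately show ?thesis using c1pos by simp
  qed
  have Fpos: "Fc > 0" using key by simp
  define T where "T = {x\<in>{1..n}. \<theta> < d x}"
  have finT: "finite T" unfolding T_def by simp
  have bonfR: "\<And>S. finite S \<Longrightarrow> (\<Sum>x\<in>S. d x) \<le> Fc + real (card S) * real (card S) * e"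
  proof -
    fix S :: "nat set" assume "finite S"
    from bonf[OF Fsub this] have "real (\<Sum>x\<in>S. card (star F x)) \<le> real (card F + card S * card S * ((n-2) choose (k-2)))"
      by (rule of_nat_mono)
    thus "(\<Sum>x\<in>S. d x) \<le> Fc + real (card S) * real (card S) * e"
      unfolding d_def Fc_def e_def by simp
  qed
  have cT: "card T < t0"
  proof (rule ccontr)
    assume "\<not> card T < t0"
    then obtain S where S: "S \<subseteq> T" "card S = t0" "finite S"
      by (meson not_less obtain_subset_with_card_n)
    have "S \<noteq> {}" using S t0pos by auto
    hence "(\<Sum>x\<in>S. \<theta>) < (\<Sum>x\<in>S. d x)"
      using S by (intro sum_strict_mono) (auto simp: T_def)
    moreover have "(\<Sum>x\<in>S. \<theta>) = Fc + real t0 * real t0 * e"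
      using S t0pos unfolding \<theta>_def by (simp add: field_simps)
    ultimately show False using bonfR[OF S(3)] S(2) by simp
  qed
  have sumT: "(\<Sum>x\<in>T. d x) \<le> Fc + real t0 * real t0 * e"
  proof -
    have "real (card T) * real (card T) * e \<le> real t0 * real t0 * e"
      using cT e0 by (intro mult_right_mono mult_mono) auto
    thus ?thesis using bonfR[OF finT] by linarith
  qed
  define D where "D = real (intersections F)"
  have D: "D = (\<Sum>x\<in>{1..n}. (d x)^2)"
    unfolding D_def d_def inter_id[OF Fsub] by simp
  have degs: "(\<Sum>x\<in>{1..n}. d x) = real k * Fc"
    unfolding d_def Fc_def using arg_cong[OF deg_sum[OF Fsub], of real] by simp
  have d0: "\<And>x. d x \<ge> 0" unfolding d_def by simp
  have TS: "T \<subseteq> {1..n}" unfolding T_def by auto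
  have "D = (\<Sum>x\<in>T. (d x)^2) + (\<Sum>x\<in>{1..n}-T. (d x)^2)"
    unfolding D using sum.subset_diff[OF TS, of "\<lambda>x. (d x)^2"] by simp
  also have "(\<Sum>x\<in>T. (d x)^2) \<le> (\<Sum>x\<in>T. m * d x)"
  proof (rule sum_mono)
    fix x assume "x \<in> T"
    hence "d x < m" using small TS unfolding d_def m_def Fc_def by auto
    thus "(d x)^2 \<le> m * d x" using d0[of x] by (simp add: power2_eq_square mult_right_mono)
  qed
  also have "(\<Sum>x\<in>{1..n}-T. (d x)^2) \<le> (\<Sum>x\<in>{1..n}-T. \<theta> * d x)"
  proof (rule sum_mono)
    fix x assume "x \<in> {1..n}-T"
    hence "d x \<le> \<theta>" unfolding T_def by auto
    thus "(d x)^2 \<le> \<theta> * d x" using d0[of x] by (simp add: power2_eq_square mult_right_mono)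
  qed
  finally have D1: "D \<le> m * (\<Sum>x\<in>T. d x) + \<theta> * (\<Sum>x\<in>{1..n}-T. d x)"
    by (simp add: sum_distrib_left)
  have th0: "\<theta> \<ge> 0" unfolding \<theta>_def using Fpos e0 by simp
  have m0: "m \<ge> 0" unfolding m_def using Fpos by simp
  have "(\<Sum>x\<in>{1..n}-T. d x) \<le> (\<Sum>x\<in>{1..n}. d x)"
    by (rule sum_mono2) (use d0 in auto)
  hence D2: "D \<le> m * (Fc + real t0 * real t0 * e) + \<theta> * (real k * Fc)"
  proof -
    have "m * (\<Sum>x\<in>T. d x) \<le> m * (Fc + real t0 * real t0 * e)" using sumT m0 by (rule mult_left_mono)
    moreover have "\<theta> * (\<Sum>x\<in>{1..n}-T. d x) \<le> \<theta> * (real k * Fc)" using \<open>(\<Sum>x\<in>{1..n}-T. d x) \<le> (\<Sum>x\<in>{1..n}. d x)\<close> degs th0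
      by (intro mult_left_mono) auto
    ultimately show ?thesis using D1 by linarith
  qed
  have rd: "real r + \<delta> > 0" using dpos by simp
  have "1 / (real r + 1) \<le> (real r + \<delta>^2) / (real r + \<delta>)^2"
  proof -
    have "(real r + \<delta>)^2 \<le> (real r + \<delta>^2) * (real r + 1)"
    proof -
      have "(real r + \<delta>^2) * (real r + 1) - (real r + \<delta>)^2 = real r * (1 - \<delta>)^2"
        by (simp add: power2_eq_square algebra_simps)
      moreover have "real r * (1 - \<delta>)^2 \<ge> 0" by simp
      ultimately show ?thesis by linarith
    qed
    thus ?thesis using rd by (simp add: field_simps)
  qed
  hence "Fc^2 / (real r + 1) \<le> D"
  proof -
    have "1 / (real r + 1) * Fc^2 \<le> (real r + \<delta>^2) / (real r + \<delta>)^2 * Fc^2"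
      using \<open>1 / (real r + 1) \<le> _\<close> by (rule mult_right_mono) simp
    thus ?thesis using Ibig unfolding D_def Fc_def by simp
  qed
  hence low: "Fc^2 \<le> (real r + 1) * D" by (simp add: field_simps)
  have "(real r + 1) * D \<le> (real r + 1) * (m * (Fc + real t0 * real t0 * e) + \<theta> * (real k * Fc))"
    using D2 by (intro mult_left_mono) auto
  also have "\<dots> = 3/8 * Fc^2 + 24 * (real k)^2 * (real r + 1)^2 * e * Fc"
  proof -
    have kp: "real k > 0" using kr by simp
    have rp: "real r + 1 > 0" by simp
    have t: "real t0 = 8 * real k * (real r + 1)" unfolding t0_def by (simp add: algebra_simps)
    have a1: "(real r + 1) * m = Fc / 4" unfolding m_def using rp by (simp add: divide_simps)
    have a2: "(real r + 1) * (Fc / real t0) * real k = Fc / 8" unfolding t using kp rp by simp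
    have "(real r + 1) * (m * (Fc + real t0 * real t0 * e) + \<theta> * (real k * Fc))
        = ((real r + 1) * m) * Fc + ((real r + 1) * m) * (real t0 * real t0) * e
          + ((real r + 1) * (Fc / real t0) * real k) * Fc + (real r + 1) * real t0 * e * real k * Fc"
      unfolding \<theta>_def by (simp add: algebra_simps)
    also have "\<dots> = Fc/4 * Fc + Fc/4 * (real t0 * real t0) * e + Fc/8 * Fc + (real r + 1) * real t0 * e * real k * Fc"
      by (simp only: a1 a2)
    also have "\<dots> = 3/8 * Fc^2 + 24 * (real k)^2 * (real r + 1)^2 * e * Fc"
      unfolding t by (simp add: algebra_simps power2_eq_square)
    finally show ?thesis .
  qed
  also have "\<dots> \<le> 3/8 * Fc^2 + 24/75 * Fc^2"
  proof -
    have "24 * (real k)^2 * (real r + 1)^2 * e * Fc = 24/75 * (75 * (real k)^2 * (real r + 1)^2 * e) * Fc"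
      by simp
    also have "\<dots> \<le> 24/75 * Fc * Fc"
    proof -
      have "24/75 * (75 * (real k)^2 * (real r + 1)^2 * e) \<le> 24/75 * Fc"
        using key by (intro mult_left_mono) auto
      thus ?thesis using Fpos by (intro mult_right_mono) auto
    qed
    finally show ?thesis by (simp add: power2_eq_square)
  qed
  finally have up: "(real r + 1) * D \<le> 3/8 * Fc^2 + 24/75 * Fc^2" .
  have "Fc^2 > 0" using Fpos by simp
  thus False using up low by linarith
qed

theorem lemma2p1:
  "\<exists>C0::real. C0 \<ge> 3000 \<and>
    (\<forall>(k::nat) (r::nat) (n::nat) (F::nat set set) (\<delta>::real).
      k \<ge> 2 \<longrightarrow>
      real n \<ge> C0 * (real r + 1)^3 * real (k + r) * (real k)^2 \<longrightarrow>
      F \<subseteq> {A. A \<subseteq> {1..n} \<and> card A = k} \<longrightarrow>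
      150 * (real k)^3 / real n \<le> \<delta> \<longrightarrow> \<delta> \<le> 1 \<longrightarrow>
      real (card F) = (\<Sum>i=1..r. real ((n - i) choose (k - 1)))
                       + \<delta> * real ((n - (r + 1)) choose (k - 1)) \<longrightarrow>
      real (intersections F) \<ge> (real r + \<delta>^2) / (real r + \<delta>)^2 * (real (card F))^2 \<longrightarrow>
      (\<exists>x\<in>{1..n}. real (card (star F x)) \<ge> real (card F) / (4 * (real r + 1))))"
  apply (rule exI[of _ 3000])
  apply (intro conjI allI impI)
   apply simp
  by (rule main; assumption)

end
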